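(* Let $\succeq$ be a preference order on $\mathcal L^\infty(\Omega,\mathcal F)$ satisfying (SM) and (PC). Then for all $f,g\in\mathcal L^\infty(\Omega,\mathcal F)$ with $f(\omega)\ge g(\omega)$ for all $\omega\in\Omega$ we have $f\succeq g$.
   Context: $\mathcal L^\infty(\Omega,\mathcal F)$: bounded $\mathcal F$-measurable real functions. Preference order: complete transitive relation; $\succ,\sim$ as usual. Null events $\mathcal N_\succeq=\{A\in\mathcal F: f1_A+g1_{A^c}\sim g\ \forall f,g\}$. (SM): for $A\notin\mathcal N_\succeq$, every $f$ and constants $x>y$: $x1_A+f1_{A^c}\succ y1_A+f1_{A^c}$. (PC): for uniformly bounded $f_n\to f$ pointwise and $g\succ f$ (resp. $f\succ g$) there is $N$ with $g\succ f_n$ (resp. $f_n\succ g$) for $n>N$. *)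

theory Defs
  imports "HOL-Analysis.Analysis"
begin

text \<open>The sample space Omega is the universe of the type 'a; F is a sigma-algebra on it.\<close>

definition Linf :: "'a set set \<Rightarrow> ('a \<Rightarrow> real) set" where
  "Linf F = {f. f \<in> borel_measurable (sigma UNIV F) \<and> bounded (range f)}"

definition pref_order :: "'a set set \<Rightarrow> (('a \<Rightarrow> real) \<Rightarrow> ('a \<Rightarrow> real) \<Rightarrow> bool) \<Rightarrow> bool" where
  "pref_order F P \<longleftrightarrow>
     (\<forall>f\<in>Linf F. \<forall>g\<in>Linf F. P f g \<or> P g f) \<and>
     (\<forall>f\<in>Linf F. \<forall>g\<in>Linf F. \<forall>h\<in>Linf F. P f g \<longrightarrow> P g h \<longrightarrow> P f h)"

definition strict_pref :: "(('a \<Rightarrow> real) \<Rightarrow> ('a \<Rightarrow> real) \<Rightarrow> bool) \<Rightarrow> ('a \<Rightarrow> real) \<Rightarrow> ('a \<Rightarrow> real) \<Rightarrow> bool" where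
  "strict_pref P f g \<longleftrightarrow> P f g \<and> \<not> P g f"

definition indiff :: "(('a \<Rightarrow> real) \<Rightarrow> ('a \<Rightarrow> real) \<Rightarrow> bool) \<Rightarrow> ('a \<Rightarrow> real) \<Rightarrow> ('a \<Rightarrow> real) \<Rightarrow> bool" where
  "indiff P f g \<longleftrightarrow> P f g \<and> P g f"

definition splice :: "'a set \<Rightarrow> ('a \<Rightarrow> real) \<Rightarrow> ('a \<Rightarrow> real) \<Rightarrow> 'a \<Rightarrow> real" where
  "splice A f g = (\<lambda>\<omega>. if \<omega> \<in> A then f \<omega> else g \<omega>)"

definition null_events :: "'a set set \<Rightarrow> (('a \<Rightarrow> real) \<Rightarrow> ('a \<Rightarrow> real) \<Rightarrow> bool) \<Rightarrow> 'a set set" where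
  "null_events F P = {A \<in> F. \<forall>f\<in>Linf F. \<forall>g\<in>Linf F. indiff P (splice A f g) g}"

definition SM :: "'a set set \<Rightarrow> (('a \<Rightarrow> real) \<Rightarrow> ('a \<Rightarrow> real) \<Rightarrow> bool) \<Rightarrow> bool" where
  "SM F P \<longleftrightarrow> (\<forall>A\<in>F. A \<notin> null_events F P \<longrightarrow>
     (\<forall>f\<in>Linf F. \<forall>x y::real. x > y \<longrightarrow>
        strict_pref P (splice A (\<lambda>_. x) f) (splice A (\<lambda>_. y) f)))"

definition PC :: "'a set set \<Rightarrow> (('a \<Rightarrow> real) \<Rightarrow> ('a \<Rightarrow> real) \<Rightarrow> bool) \<Rightarrow> bool" where
  "PC F P \<longleftrightarrow> (\<forall>fs f g. (\<forall>n. fs n \<in> Linf F) \<and> f \<in> Linf F \<and> g \<in> Linf F \<and>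
      (\<exists>B. \<forall>n \<omega>. \<bar>fs n \<omega>\<bar> \<le> B) \<and> (\<forall>\<omega>. (\<lambda>n. fs n \<omega>) \<longlonglongrightarrow> f \<omega>) \<longrightarrow>
      (strict_pref P g f \<longrightarrow> (\<exists>N. \<forall>n>N. strict_pref P g (fs n))) \<and>
      (strict_pref P f g \<longrightarrow> (\<exists>N. \<forall>n>N. strict_pref P (fs n) g)))"

end

theory Submission
  imports Defs
begin

lemma sets_sig: assumes "sigma_algebra UNIV F" shows "sets (sigma UNIV F) = F"
  using assms by (simp add: sets_measure_of sigma_algebra.sigma_sets_eq sigma_algebra_iff2)

lemma Linf_const: "(\<lambda>_. c) \<in> Linf F"
  unfolding Linf_def by auto

lemma Linf_splice: assumes "sigma_algebra UNIV F" "A \<in> F" "u \<in> Linf F" "w \<in> Linf F"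
  shows "splice A u w \<in> Linf F"
proof -
  have m: "splice A u w \<in> borel_measurable (sigma UNIV F)"
    unfolding splice_def using assms sets_sig[OF assms(1)]
    by (intro measurable_If_set) (auto simp: Linf_def)
  have "range (splice A u w) \<subseteq> range u \<union> range w" by (auto simp: splice_def)
  moreover have "bounded (range u \<union> range w)" using assms by (auto simp: Linf_def)
  ultimately show ?thesis using m bounded_subset unfolding Linf_def by blast
qed

lemma level_in: assumes "sigma_algebra UNIV F" "u \<in> Linf F" "v \<in> Linf F"
  shows "{\<omega>. u \<omega> = a \<and> v \<omega> = b} \<in> F"
proof -
  have mu: "u \<in> borel_measurable (sigma UNIV F)" "v \<in> borel_measurable (sigma UNIV F)"
    using assms by (auto simp: Linf_def)
  have "{\<omega> \<in> space (sigma UNIV F). u \<omega> = a \<and> v \<omega> = b} \<in> sets (sigma UNIV F)"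
    using mu by measurable
  then show ?thesis using sets_sig[OF assms(1)] by simp
qed

lemma refl_P: assumes "pref_order F P" "u \<in> Linf F" shows "P u u"
  using assms unfolding pref_order_def by blast

lemma step_P:
  assumes sa: "sigma_algebra UNIV F" and po: "pref_order F P" and sm: "SM F P"
    and u: "u \<in> Linf F" and A: "A \<in> F" and ab: "a > b" and uA: "\<forall>\<omega>\<in>A. u \<omega> = a"
  shows "P u (splice A (\<lambda>_. b) u)"
proof -
  have ueq: "splice A (\<lambda>_. a) u = u" using uA by (auto simp: splice_def)
  have la: "splice A (\<lambda>_. a) u \<in> Linf F" and lb: "splice A (\<lambda>_. b) u \<in> Linf F"
    using Linf_splice[OF sa A Linf_const u] by auto
  show ?thesis
  proof (cases "A \<in> null_events F P")
    case False
    then have "strict_pref P (splice A (\<lambda>_. a) u) (splice A (\<lambda>_. b) u)"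
      using sm A u ab unfolding SM_def by blast
    then show ?thesis using ueq by (simp add: strict_pref_def)
  next
    case True
    then have "indiff P (splice A (\<lambda>_. b) u) u"
      unfolding null_events_def using Linf_const u by blast
    then show ?thesis by (simp add: indiff_def)
  qed
qed

lemma fin_mono:
  assumes sa: "sigma_algebra UNIV F" and po: "pref_order F P" and sm: "SM F P"
  shows "finite R \<Longrightarrow> \<forall>u\<in>Linf F. \<forall>v\<in>Linf F. (\<forall>\<omega>. v \<omega> \<le> u \<omega>) \<longrightarrow>
     {(u \<omega>, v \<omega>)|\<omega>. u \<omega> \<noteq> v \<omega>} \<subseteq> R \<longrightarrow> P u v"
proof (induction R rule: finite_induct)
  case empty
  show ?case
  proof (intro ballI impI)
    fix u v assume u: "u \<in> Linf F" and "{(u \<omega>, v \<omega>)|\<omega>. u \<omega> \<noteq> v \<omega>} \<subseteq> {}"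
    then have "u = v" by (intro ext) blast
    then show "P u v" using refl_P[OF po u] by simp
  qed
next
  case (insert p R)
  obtain a b where p: "p = (a, b)" by fastforce
  show ?case
  proof (intro ballI impI)
    fix u v assume u: "u \<in> Linf F" and v: "v \<in> Linf F" and le: "\<forall>\<omega>. v \<omega> \<le> u \<omega>"
      and sub: "{(u \<omega>, v \<omega>)|\<omega>. u \<omega> \<noteq> v \<omega>} \<subseteq> insert p R"
    define A where "A = {\<omega>. u \<omega> = a \<and> v \<omega> = b}"
    have AF: "A \<in> F" unfolding A_def by (rule level_in[OF sa u v])
    show "P u v"
    proof (cases "A = {} \<or> a = b")
      case True
      then have "{(u \<omega>, v \<omega>)|\<omega>. u \<omega> \<noteq> v \<omega>} \<subseteq> R" using sub p unfolding A_def by auto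
      then show ?thesis using insert.IH[rule_format, OF u v le[rule_format]] by simp
    next
      case False
      then obtain \<omega>0 where "\<omega>0 \<in> A" by blast
      then have "u \<omega>0 = a" "v \<omega>0 = b" unfolding A_def by auto
      then have ab: "a > b" using False le[rule_format, of \<omega>0] by auto
      define w where "w = splice A (\<lambda>_. b) u"
      have w: "w \<in> Linf F" unfolding w_def by (rule Linf_splice[OF sa AF Linf_const u])
      have "P u w" unfolding w_def by (rule step_P[OF sa po sm u AF ab]) (auto simp: A_def)
      moreover have "P w v"
      proof -
        have "\<forall>\<omega>. v \<omega> \<le> w \<omega>" using le by (auto simp: w_def splice_def A_def)
        moreover have "{(w \<omega>, v \<omega>)|\<omega>. w \<omega> \<noteq> v \<omega>} \<subseteq> R"
          using sub p by (auto simp: w_def splice_def A_def)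
        ultimately show ?thesis using insert.IH[rule_format, OF w v] by simp
      qed
      ultimately show ?thesis using po u v w unfolding pref_order_def by (meson)
    qed
  qed
qed

lemma finite_ceil_range: assumes "\<forall>\<omega>. \<bar>h \<omega>\<bar> \<le> B"
  shows "finite (range (\<lambda>\<omega>. real_of_int \<lceil>h \<omega>\<rceil>))"
proof -
  have "range (\<lambda>\<omega>. real_of_int \<lceil>h \<omega>\<rceil>) \<subseteq> real_of_int ` {-\<lceil>B\<rceil>..\<lceil>B\<rceil>}"
  proof
    fix x assume "x \<in> range (\<lambda>\<omega>. real_of_int \<lceil>h \<omega>\<rceil>)"
    then obtain \<omega> where x: "x = real_of_int \<lceil>h \<omega>\<rceil>" by auto
    have "\<lceil>h \<omega>\<rceil> \<in> {-\<lceil>B\<rceil>..\<lceil>B\<rceil>}" using assms[rule_format, of \<omega>]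
    proof -
      have h: "-B \<le> h \<omega>" "h \<omega> \<le> B" using assms[rule_format, of \<omega>] by auto
      have "\<lceil>h \<omega>\<rceil> \<le> \<lceil>B\<rceil>" using h(2) by (rule ceiling_mono)
      moreover have "\<lceil>-B\<rceil> \<le> \<lceil>h \<omega>\<rceil>" using h(1) by (rule ceiling_mono)
      moreover have "-\<lceil>B\<rceil> \<le> \<lceil>-B\<rceil>" by (simp add: ceiling_minus floor_le_ceiling)
      ultimately show ?thesis by simp
    qed
    then show "x \<in> real_of_int ` {-\<lceil>B\<rceil>..\<lceil>B\<rceil>}" using x by blast
  qed
  then show ?thesis by (rule finite_subset) simp
qed

lemma finite_floor_range: assumes "\<forall>\<omega>. \<bar>h \<omega>\<bar> \<le> B"
  shows "finite (range (\<lambda>\<omega>. real_of_int \<lfloor>h \<omega>\<rfloor>))"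
proof -
  have "range (\<lambda>\<omega>. real_of_int \<lfloor>h \<omega>\<rfloor>) \<subseteq> real_of_int ` {-\<lceil>B\<rceil>..\<lceil>B\<rceil>}"
  proof
    fix x assume "x \<in> range (\<lambda>\<omega>. real_of_int \<lfloor>h \<omega>\<rfloor>)"
    then obtain \<omega> where x: "x = real_of_int \<lfloor>h \<omega>\<rfloor>" by auto
    have "\<lfloor>h \<omega>\<rfloor> \<in> {-\<lceil>B\<rceil>..\<lceil>B\<rceil>}" using assms[rule_format, of \<omega>]
    proof -
      have h: "-B \<le> h \<omega>" "h \<omega> \<le> B" using assms[rule_format, of \<omega>] by auto
      have "\<lfloor>h \<omega>\<rfloor> \<le> \<lfloor>B\<rfloor>" using h(2) by (rule floor_mono)
      moreover have "\<lfloor>-B\<rfloor> \<le> \<lfloor>h \<omega>\<rfloor>" using h(1) by (rule floor_mono)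
      moreover have "\<lfloor>-B\<rfloor> = -\<lceil>B\<rceil>" by (simp add: floor_minus)
      moreover have "\<lfloor>B\<rfloor> \<le> \<lceil>B\<rceil>" by (rule floor_le_ceiling)
      ultimately show ?thesis unfolding atLeastAtMost_iff by linarith
    qed
    then show "x \<in> real_of_int ` {-\<lceil>B\<rceil>..\<lceil>B\<rceil>}" using x by blast
  qed
  then show ?thesis by (rule finite_subset) simp
qed

lemma bound_of: assumes "f \<in> Linf F" obtains B where "\<forall>\<omega>. \<bar>f \<omega>\<bar> \<le> B"
  using assms unfolding Linf_def bounded_iff by (auto simp: real_norm_def)

definition up :: "('a \<Rightarrow> real) \<Rightarrow> nat \<Rightarrow> 'a \<Rightarrow> real" where
  "up f n = (\<lambda>\<omega>. real_of_int \<lceil>real (Suc n) * f \<omega>\<rceil> / real (Suc n))"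
definition lo :: "('a \<Rightarrow> real) \<Rightarrow> nat \<Rightarrow> 'a \<Rightarrow> real" where
  "lo f n = (\<lambda>\<omega>. real_of_int \<lfloor>real (Suc n) * f \<omega>\<rfloor> / real (Suc n))"

lemma up_ge: "f \<omega> \<le> up f n \<omega>"
proof -
  have "real (Suc n) * f \<omega> \<le> real_of_int \<lceil>real (Suc n) * f \<omega>\<rceil>" by (rule le_of_int_ceiling)
  then show ?thesis unfolding up_def by (simp add: field_simps)
qed

lemma up_le: "up f n \<omega> \<le> f \<omega> + 1 / real (Suc n)"
proof -
  have "real_of_int \<lceil>real (Suc n) * f \<omega>\<rceil> \<le> real (Suc n) * f \<omega> + 1" by (rule of_int_ceiling_le_add_one)
  then have "real_of_int \<lceil>real (Suc n) * f \<omega>\<rceil> / real (Suc n) \<le> (real (Suc n) * f \<omega> + 1) / real (Suc n)"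
    by (rule divide_right_mono) simp
  also have "\<dots> = f \<omega> + 1 / real (Suc n)" by (simp add: field_simps del: of_nat_Suc)
  finally show ?thesis unfolding up_def .
qed

lemma lo_le: "lo f n \<omega> \<le> f \<omega>"
proof -
  have "real_of_int \<lfloor>real (Suc n) * f \<omega>\<rfloor> \<le> real (Suc n) * f \<omega>" by (rule of_int_floor_le)
  then show ?thesis unfolding lo_def by (simp add: field_simps)
qed

lemma lo_ge: "f \<omega> - 1 / real (Suc n) \<le> lo f n \<omega>"
proof -
  have "real (Suc n) * f \<omega> - 1 \<le> real_of_int \<lfloor>real (Suc n) * f \<omega>\<rfloor>"
    using real_of_int_floor_add_one_gt[of "real (Suc n) * f \<omega>"] by linarith
  then have "(real (Suc n) * f \<omega> - 1) / real (Suc n) \<le> real_of_int \<lfloor>real (Suc n) * f \<omega>\<rfloor> / real (Suc n)"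
    by (rule divide_right_mono) simp
  moreover have "(real (Suc n) * f \<omega> - 1) / real (Suc n) = f \<omega> - 1 / real (Suc n)" by (simp add: field_simps del: of_nat_Suc)
  ultimately show ?thesis unfolding lo_def by simp
qed

lemma inv_lim: "(\<lambda>n. 1 / real (Suc n)) \<longlonglongrightarrow> 0"
  using LIMSEQ_inverse_real_of_nat by (simp add: inverse_eq_divide)

lemma up_lim: "(\<lambda>n. up f n \<omega>) \<longlonglongrightarrow> f \<omega>"
proof -
  have "(\<lambda>n. f \<omega> + 1 / real (Suc n)) \<longlonglongrightarrow> f \<omega> + 0" by (intro tendsto_intros inv_lim)
  then have l: "(\<lambda>n. f \<omega> + 1 / real (Suc n)) \<longlonglongrightarrow> f \<omega>" by simp
  show ?thesis
  proof (rule real_tendsto_sandwich[of "\<lambda>_. f \<omega>" _ _ "\<lambda>n. f \<omega> + 1 / real (Suc n)"])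
    show "\<forall>\<^sub>F n in sequentially. f \<omega> \<le> up f n \<omega>" by (intro always_eventually allI up_ge)
    show "\<forall>\<^sub>F n in sequentially. up f n \<omega> \<le> f \<omega> + 1 / real (Suc n)" by (intro always_eventually allI up_le)
  qed (rule tendsto_const, rule l)
qed

lemma lo_lim: "(\<lambda>n. lo f n \<omega>) \<longlonglongrightarrow> f \<omega>"
proof -
  have "(\<lambda>n. f \<omega> - 1 / real (Suc n)) \<longlonglongrightarrow> f \<omega> - 0" by (intro tendsto_intros inv_lim)
  then have l: "(\<lambda>n. f \<omega> - 1 / real (Suc n)) \<longlonglongrightarrow> f \<omega>" by simp
  show ?thesis
  proof (rule real_tendsto_sandwich[of "\<lambda>n. f \<omega> - 1 / real (Suc n)" _ _ "\<lambda>_. f \<omega>"])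
    show "\<forall>\<^sub>F n in sequentially. f \<omega> - 1 / real (Suc n) \<le> lo f n \<omega>" by (intro always_eventually allI lo_ge)
    show "\<forall>\<^sub>F n in sequentially. lo f n \<omega> \<le> f \<omega>" by (intro always_eventually allI lo_le)
  qed (rule l, rule tendsto_const)
qed

lemma up_Linf: assumes "f \<in> Linf F" and B: "\<forall>\<omega>. \<bar>f \<omega>\<bar> \<le> B"
  shows "up f n \<in> Linf F" "\<forall>\<omega>. \<bar>up f n \<omega>\<bar> \<le> \<bar>B\<bar> + 1" "finite (range (up f n))"
proof -
  have m: "f \<in> borel_measurable (sigma UNIV F)" using assms by (simp add: Linf_def)
  have bd: "\<forall>\<omega>. \<bar>up f n \<omega>\<bar> \<le> \<bar>B\<bar> + 1"
  proof
    fix \<omega>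
    have "1 / real (Suc n) \<le> 1" by simp
    then show "\<bar>up f n \<omega>\<bar> \<le> \<bar>B\<bar> + 1" using up_ge[of f \<omega> n] up_le[of f n \<omega>] B[rule_format, of \<omega>] by linarith
  qed
  then show "\<forall>\<omega>. \<bar>up f n \<omega>\<bar> \<le> \<bar>B\<bar> + 1" .
  have "up f n \<in> borel_measurable (sigma UNIV F)" unfolding up_def using m by measurable
  moreover have "bounded (range (up f n))" using bd unfolding bounded_iff by (auto simp: real_norm_def)
  ultimately show "up f n \<in> Linf F" by (simp add: Linf_def)
  have "\<forall>\<omega>. \<bar>real (Suc n) * f \<omega>\<bar> \<le> real (Suc n) * \<bar>B\<bar>"
  proof
    fix \<omega>
    have "\<bar>f \<omega>\<bar> \<le> \<bar>B\<bar>" using B[rule_format, of \<omega>] by linarith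
    then show "\<bar>real (Suc n) * f \<omega>\<bar> \<le> real (Suc n) * \<bar>B\<bar>"
      unfolding abs_mult abs_of_nat by (intro mult_left_mono) auto
  qed
  then have "finite (range (\<lambda>\<omega>. real_of_int \<lceil>real (Suc n) * f \<omega>\<rceil>))" by (rule finite_ceil_range)
  then have "finite ((\<lambda>x. x / real (Suc n)) ` range (\<lambda>\<omega>. real_of_int \<lceil>real (Suc n) * f \<omega>\<rceil>))" by simp
  moreover have "range (up f n) = (\<lambda>x. x / real (Suc n)) ` range (\<lambda>\<omega>. real_of_int \<lceil>real (Suc n) * f \<omega>\<rceil>)"
    unfolding up_def by (simp add: image_image)
  ultimately show "finite (range (up f n))" by simp
qed

lemma lo_Linf: assumes "f \<in> Linf F" and B: "\<forall>\<omega>. \<bar>f \<omega>\<bar> \<le> B"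
  shows "lo f n \<in> Linf F" "\<forall>\<omega>. \<bar>lo f n \<omega>\<bar> \<le> \<bar>B\<bar> + 1" "finite (range (lo f n))"
proof -
  have m: "f \<in> borel_measurable (sigma UNIV F)" using assms by (simp add: Linf_def)
  have bd: "\<forall>\<omega>. \<bar>lo f n \<omega>\<bar> \<le> \<bar>B\<bar> + 1"
  proof
    fix \<omega>
    have "1 / real (Suc n) \<le> 1" by simp
    then show "\<bar>lo f n \<omega>\<bar> \<le> \<bar>B\<bar> + 1" using lo_ge[of f \<omega> n] lo_le[of f n \<omega>] B[rule_format, of \<omega>] by linarith
  qed
  then show "\<forall>\<omega>. \<bar>lo f n \<omega>\<bar> \<le> \<bar>B\<bar> + 1" .
  have "lo f n \<in> borel_measurable (sigma UNIV F)" unfolding lo_def using m by measurable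
  moreover have "bounded (range (lo f n))" using bd unfolding bounded_iff by (auto simp: real_norm_def)
  ultimately show "lo f n \<in> Linf F" by (simp add: Linf_def)
  have "\<forall>\<omega>. \<bar>real (Suc n) * f \<omega>\<bar> \<le> real (Suc n) * \<bar>B\<bar>"
  proof
    fix \<omega>
    have "\<bar>f \<omega>\<bar> \<le> \<bar>B\<bar>" using B[rule_format, of \<omega>] by linarith
    then show "\<bar>real (Suc n) * f \<omega>\<bar> \<le> real (Suc n) * \<bar>B\<bar>"
      unfolding abs_mult abs_of_nat by (intro mult_left_mono) auto
  qed
  then have "finite (range (\<lambda>\<omega>. real_of_int \<lfloor>real (Suc n) * f \<omega>\<rfloor>))" by (rule finite_floor_range)
  then have "finite ((\<lambda>x. x / real (Suc n)) ` range (\<lambda>\<omega>. real_of_int \<lfloor>real (Suc n) * f \<omega>\<rfloor>))" by simp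
  moreover have "range (lo f n) = (\<lambda>x. x / real (Suc n)) ` range (\<lambda>\<omega>. real_of_int \<lfloor>real (Suc n) * f \<omega>\<rfloor>)"
    unfolding lo_def by (simp add: image_image)
  ultimately show "finite (range (lo f n))" by simp
qed

lemma PC_inst:
  assumes "PC F P" "\<forall>n. fs n \<in> Linf F" "f \<in> Linf F" "g \<in> Linf F"
    "\<exists>B. \<forall>n \<omega>. \<bar>fs n \<omega>\<bar> \<le> B" "\<forall>\<omega>. (\<lambda>n. fs n \<omega>) \<longlonglongrightarrow> f \<omega>"
  shows "strict_pref P g f \<Longrightarrow> \<exists>N. \<forall>n>N. strict_pref P g (fs n)"
    and "strict_pref P f g \<Longrightarrow> \<exists>N. \<forall>n>N. strict_pref P (fs n) g"
proof -
  have "(\<forall>n. fs n \<in> Linf F) \<and> f \<in> Linf F \<and> g \<in> Linf F \<and> (\<exists>B. \<forall>n \<omega>. \<bar>fs n \<omega>\<bar> \<le> B) \<and>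
    (\<forall>\<omega>. (\<lambda>n. fs n \<omega>) \<longlonglongrightarrow> f \<omega>) \<longrightarrow>
      (strict_pref P g f \<longrightarrow> (\<exists>N. \<forall>n>N. strict_pref P g (fs n))) \<and>
      (strict_pref P f g \<longrightarrow> (\<exists>N. \<forall>n>N. strict_pref P (fs n) g))"
    using assms(1) unfolding PC_def by (rule spec[where x=g, OF spec[where x=f, OF spec[where x=fs]]])
  then have c: "(strict_pref P g f \<longrightarrow> (\<exists>N. \<forall>n>N. strict_pref P g (fs n))) \<and>
      (strict_pref P f g \<longrightarrow> (\<exists>N. \<forall>n>N. strict_pref P (fs n) g))"
    using assms(2-6) by simp
  show "strict_pref P g f \<Longrightarrow> \<exists>N. \<forall>n>N. strict_pref P g (fs n)" using c by simp
  show "strict_pref P f g \<Longrightarrow> \<exists>N. \<forall>n>N. strict_pref P (fs n) g" using c by simp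
qed

theorem mainTheorem12:
  fixes F :: "'a set set"
    and P :: "('a \<Rightarrow> real) \<Rightarrow> ('a \<Rightarrow> real) \<Rightarrow> bool"
  assumes "sigma_algebra UNIV F"
    and "pref_order F P"
    and "SM F P"
    and "PC F P"
  shows "\<forall>f\<in>Linf F. \<forall>g\<in>Linf F. (\<forall>\<omega>. f \<omega> \<ge> g \<omega>) \<longrightarrow> P f g"
proof (intro ballI impI)
  fix f g assume f: "f \<in> Linf F" and g: "g \<in> Linf F" and fg: "\<forall>\<omega>. f \<omega> \<ge> g \<omega>"
  obtain B where B: "\<forall>\<omega>. \<bar>f \<omega>\<bar> \<le> B" using bound_of[OF f] by blast
  obtain C where C: "\<forall>\<omega>. \<bar>g \<omega>\<bar> \<le> C" using bound_of[OF g] by blast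
  have compl: "\<forall>f\<in>Linf F. \<forall>g\<in>Linf F. P f g \<or> P g f" using assms(2) unfolding pref_order_def by (rule conjunct1)
  show "P f g"
  proof (rule ccontr)
    assume nP: "\<not> P f g"
    have "P f g \<or> P g f" using compl f g by simp
    then have "P g f" using nP by simp
    then have s1: "strict_pref P g f" using nP by (simp add: strict_pref_def)
    have ub: "\<exists>B. \<forall>n \<omega>. \<bar>up f n \<omega>\<bar> \<le> B" using up_Linf(2)[OF f B] by blast
    have "\<exists>N. \<forall>n>N. strict_pref P g (up f n)"
      by (rule PC_inst(1)[OF assms(4) _ f g ub _ s1]) (simp_all add: up_Linf(1)[OF f B] up_lim)
    then obtain N where N: "strict_pref P g (up f (Suc N))" by blast
    define h where "h = up f (Suc N)"
    have h: "h \<in> Linf F" "finite (range h)" using up_Linf[OF f B] by (auto simp: h_def)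
    have lb: "\<exists>B. \<forall>n \<omega>. \<bar>lo g n \<omega>\<bar> \<le> B" using lo_Linf(2)[OF g C] by blast
    have "\<exists>M. \<forall>m>M. strict_pref P (lo g m) h"
      by (rule PC_inst(2)[OF assms(4) _ g h(1) lb _ N[folded h_def]]) (simp_all add: lo_Linf(1)[OF g C] lo_lim)
    then obtain M where M: "strict_pref P (lo g (Suc M)) h" by blast
    define k where "k = lo g (Suc M)"
    have k: "k \<in> Linf F" "finite (range k)" using lo_Linf[OF g C] by (auto simp: k_def)
    have le: "\<forall>\<omega>. k \<omega> \<le> h \<omega>"
    proof
      fix \<omega>
      show "k \<omega> \<le> h \<omega>" unfolding h_def k_def
        using lo_le[of g "Suc M" \<omega>] fg[rule_format, of \<omega>] up_ge[of f \<omega> "Suc N"] by linarith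
    qed
    have "{(h \<omega>, k \<omega>)|\<omega>. h \<omega> \<noteq> k \<omega>} \<subseteq> range h \<times> range k" by auto
    moreover have "finite (range h \<times> range k)" using h k by simp
    ultimately have "P h k" using fin_mono[OF assms(1-3), rule_format, OF _ h(1) k(1) le[rule_format]] by simp
    then show False using M unfolding k_def by (simp add: strict_pref_def)
  qed
qed

end
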